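(* Let $(X_0,X_1,\dots,X_n)$ be a centered Gaussian random vector. Then for any $x>0$, $$P\Big(\max_{j=1,\dots,n}|X_j-X_{j-1}|<x\Big)\le P\Big(\max_{j=1,\dots,n-1}|X_j-X_{j-1}|<x\Big)\,P\big(|X_n-E(X_n\mid\mathcal{F}_{n-1})|<x\big),$$ where $\mathcal{F}_{n-1}=\sigma(X_0,\dots,X_{n-1})$. *)

theory Defs
  imports "HOL-Probability.Probability"
begin

definition centered_gaussian_vector :: "'a measure \<Rightarrow> nat \<Rightarrow> (nat \<Rightarrow> 'a \<Rightarrow> real) \<Rightarrow> bool" where
  "centered_gaussian_vector M n X \<longleftrightarrow>
     (\<forall>i\<le>n. X i \<in> borel_measurable M) \<and>
     (\<forall>c :: nat \<Rightarrow> real.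
        (AE \<omega> in M. (\<Sum>i\<le>n. c i * X i \<omega>) = 0) \<or>
        (\<exists>\<sigma>>0. distributed M lborel (\<lambda>\<omega>. \<Sum>i\<le>n. c i * X i \<omega>) (normal_density 0 \<sigma>)))"

definition gen_sigma :: "'a measure \<Rightarrow> nat \<Rightarrow> (nat \<Rightarrow> 'a \<Rightarrow> real) \<Rightarrow> 'a measure" where
  "gen_sigma M m X =
     sigma (space M) {X i -` A \<inter> space M | i A. i \<le> m \<and> A \<in> sets borel}"

end

theory Submission
  imports Defs
begin

lemma (in prob_space) integrable_bounded_cmult:
  fixes g :: "'a \<Rightarrow> real" and h :: "'a \<Rightarrow> complex"
  assumes "integrable M g" "h \<in> borel_measurable M" "\<And>\<omega>. norm (h \<omega>) \<le> 1"
  shows "integrable M (\<lambda>\<omega>. complex_of_real (g \<omega>) * h \<omega>)"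
proof (rule Bochner_Integration.integrable_bound[where f="\<lambda>\<omega>. complex_of_real (g \<omega>)"])
  show "integrable M (\<lambda>\<omega>. complex_of_real (g \<omega>))" using assms(1) by simp
  show "(\<lambda>\<omega>. complex_of_real (g \<omega>) * h \<omega>) \<in> borel_measurable M"
  proof -
    have [measurable]: "g \<in> borel_measurable M" "h \<in> borel_measurable M"
      using assms(1,2) by auto
    show ?thesis by measurable
  qed
  show "AE \<omega> in M. norm (complex_of_real (g \<omega>) * h \<omega>) \<le> norm (complex_of_real (g \<omega>))"
    using assms(3) by (auto simp: norm_mult intro!: mult_left_le)
qed

lemma borel_measurable_iexp_real: "iexp \<in> borel_measurable borel"
  by (intro borel_measurable_continuous_onI continuous_intros)

lemma borel_measurable_iexp[measurable]:
  "f \<in> borel_measurable M \<Longrightarrow> (\<lambda>x. iexp (f x)) \<in> borel_measurable M"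
  using measurable_compose[OF _ borel_measurable_iexp_real] by blast

lemma integrable_bounded_rmult:
  fixes g h :: "'a \<Rightarrow> real"
  assumes "integrable M g" "h \<in> borel_measurable M" "\<And>\<omega>. \<bar>h \<omega>\<bar> \<le> 1"
  shows "integrable M (\<lambda>\<omega>. g \<omega> * h \<omega>)"
proof (rule Bochner_Integration.integrable_bound[where f=g])
  show "integrable M g" by fact
  have [measurable]: "g \<in> borel_measurable M" "h \<in> borel_measurable M"
    using assms(1,2) by auto
  show "(\<lambda>\<omega>. g \<omega> * h \<omega>) \<in> borel_measurable M" by measurable
  show "AE \<omega> in M. norm (g \<omega> * h \<omega>) \<le> norm (g \<omega>)"
    using assms(3) by (auto simp: abs_mult intro!: mult_left_le)
qed

lemma norm_iexp[simp]: "norm (iexp x) = 1"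
  by (simp add: norm_exp_i_times)

lemma (in prob_space) char_density_distr:
  fixes g Z :: "'a \<Rightarrow> real"
  assumes g: "integrable M g" "\<And>\<omega>. g \<omega> \<ge> 0" and Z[measurable]: "Z \<in> borel_measurable M"
  shows "char (distr (density M g) borel Z) t = (\<integral>\<omega>. complex_of_real (g \<omega>) * iexp (t * Z \<omega>) \<partial>M)"
proof -
  have [measurable]: "g \<in> borel_measurable M" using g by auto
  have "char (distr (density M g) borel Z) t = (\<integral>x. iexp (t * x) \<partial>distr (density M g) borel Z)"
    unfolding char_def by simp
  also have "\<dots> = (\<integral>\<omega>. iexp (t * Z \<omega>) \<partial>density M g)"
    by (rule integral_distr) (simp, measurable)
  also have "\<dots> = (\<integral>\<omega>. g \<omega> *\<^sub>R iexp (t * Z \<omega>) \<partial>M)"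
    by (rule integral_density) (measurable, simp add: g)
  finally show ?thesis by (simp add: scaleR_conv_of_real)
qed

lemma (in prob_space) real_distribution_density_distr:
  fixes g Z :: "'a \<Rightarrow> real"
  assumes g: "integrable M g" "\<And>\<omega>. g \<omega> \<ge> 0" "(\<integral>\<omega>. g \<omega> \<partial>M) = 1"
    and Z[measurable]: "Z \<in> borel_measurable M"
  shows "real_distribution (distr (density M g) borel Z)"
proof -
  have [measurable]: "g \<in> borel_measurable M" using g by auto
  have "prob_space (density M g)"
  proof
    have "emeasure (density M g) (space (density M g)) = (\<integral>\<^sup>+\<omega>. ennreal (g \<omega>) \<partial>M)"
      using emeasure_density[of g M "space M"] by simp
    also have "\<dots> = ennreal (\<integral>\<omega>. g \<omega> \<partial>M)"
      by (rule nn_integral_eq_integral) (auto simp: g)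
    finally show "emeasure (density M g) (space (density M g)) = 1" using g(3) by simp
  qed
  then interpret D: prob_space "density M g" .
  show ?thesis by (rule D.real_distribution_distr) (simp, measurable)
qed

lemma (in prob_space) fourier_unique_real:
  fixes f Z :: "'a \<Rightarrow> real"
  assumes f: "integrable M f" and Zm[measurable]: "Z \<in> borel_measurable M"
    and h: "\<And>u. (\<integral>\<omega>. complex_of_real (f \<omega>) * iexp (u * Z \<omega>) \<partial>M) = 0"
    and C[measurable]: "C \<in> sets borel"
  shows "(\<integral>\<omega>. f \<omega> * indicator C (Z \<omega>) \<partial>M) = 0"
proof -
  have [measurable]: "f \<in> borel_measurable M" using f by auto
  define fp where "fp \<omega> = max (f \<omega>) 0" for \<omega>
  define fm where "fm \<omega> = max (- f \<omega>) 0" for \<omega>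
  have fpi: "integrable M fp" "integrable M fm" unfolding fp_def fm_def
    by (intro integrable_max f integrable_zero integrable_minus)+
  have [measurable]: "fp \<in> borel_measurable M" "fm \<in> borel_measurable M" using fpi by auto
  have fs: "f \<omega> = fp \<omega> - fm \<omega>" for \<omega> by (auto simp: fp_def fm_def)
  have nn: "fp \<omega> \<ge> 0" "fm \<omega> \<ge> 0" for \<omega> by (auto simp: fp_def fm_def)
  have ip: "integrable M (\<lambda>\<omega>. complex_of_real (fp \<omega>) * iexp (u * Z \<omega>))" for u
    by (rule integrable_bounded_cmult[OF fpi(1)]) auto
  have im: "integrable M (\<lambda>\<omega>. complex_of_real (fm \<omega>) * iexp (u * Z \<omega>))" for u
    by (rule integrable_bounded_cmult[OF fpi(2)]) auto
  have gen: "(\<integral>\<omega>. complex_of_real (fp \<omega>) * iexp (u * Z \<omega>) \<partial>M) =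
             (\<integral>\<omega>. complex_of_real (fm \<omega>) * iexp (u * Z \<omega>) \<partial>M)" for u
  proof -
    have "(\<integral>\<omega>. complex_of_real (fp \<omega>) * iexp (u * Z \<omega>) \<partial>M) -
          (\<integral>\<omega>. complex_of_real (fm \<omega>) * iexp (u * Z \<omega>) \<partial>M) =
          (\<integral>\<omega>. complex_of_real (f \<omega>) * iexp (u * Z \<omega>) \<partial>M)"
      by (subst Bochner_Integration.integral_diff[OF ip im, symmetric])
         (simp add: fs algebra_simps)
    then show ?thesis using h[of u] by simp
  qed
  define m where "m = (\<integral>\<omega>. fp \<omega> \<partial>M)"
  have mm: "m = (\<integral>\<omega>. fm \<omega> \<partial>M)"
    using gen[of 0] by (simp add: m_def)
  have m0: "m \<ge> 0" unfolding m_def by (rule integral_nonneg_AE) (simp add: nn)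
  have split: "(\<integral>\<omega>. f \<omega> * indicator C (Z \<omega>) \<partial>M) =
     (\<integral>\<omega>. fp \<omega> * indicator C (Z \<omega>) \<partial>M) - (\<integral>\<omega>. fm \<omega> * indicator C (Z \<omega>) \<partial>M)"
    by (subst Bochner_Integration.integral_diff[symmetric])
       (auto intro!: integrable_bounded_rmult fpi simp: fs algebra_simps)
  show ?thesis
  proof (cases "m = 0")
    case True
    have "AE \<omega> in M. fp \<omega> = 0" using True fpi(1) nn
      by (subst integral_nonneg_eq_0_iff_AE[symmetric]) (auto simp: m_def)
    moreover have "AE \<omega> in M. fm \<omega> = 0" using True fpi(2) nn mm
      by (subst integral_nonneg_eq_0_iff_AE[symmetric]) auto
    ultimately have "AE \<omega> in M. f \<omega> * indicator C (Z \<omega>) = 0" by (auto simp: fs)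
    then show ?thesis by (simp add: integral_eq_zero_AE)
  next
    case False
    then have mpos: "m > 0" using m0 by simp
    define gp where "gp \<omega> = fp \<omega> / m" for \<omega>
    define gm where "gm \<omega> = fm \<omega> / m" for \<omega>
    have gi: "integrable M gp" "integrable M gm" unfolding gp_def gm_def using fpi by simp_all
    have gn: "gp \<omega> \<ge> 0" "gm \<omega> \<ge> 0" for \<omega> using nn mpos by (auto simp: gp_def gm_def)
    have g1: "(\<integral>\<omega>. gp \<omega> \<partial>M) = 1" "(\<integral>\<omega>. gm \<omega> \<partial>M) = 1"
      using mpos mm by (auto simp: gp_def gm_def m_def)
    have rp: "real_distribution (distr (density M gp) borel Z)"
      by (rule real_distribution_density_distr[OF gi(1) gn(1) g1(1)]) simp
    have rm: "real_distribution (distr (density M gm) borel Z)"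
      by (rule real_distribution_density_distr[OF gi(2) gn(2) g1(2)]) simp
    have "char (distr (density M gp) borel Z) = char (distr (density M gm) borel Z)"
    proof
      fix t
      have "char (distr (density M gp) borel Z) t = (\<integral>\<omega>. complex_of_real (gp \<omega>) * iexp (t * Z \<omega>) \<partial>M)"
        by (rule char_density_distr[OF gi(1) gn(1)]) simp
      also have "\<dots> = (\<integral>\<omega>. complex_of_real (fp \<omega>) * iexp (t * Z \<omega>) \<partial>M) / complex_of_real m"
        by (simp add: gp_def divide_simps mult_ac)
      also have "\<dots> = (\<integral>\<omega>. complex_of_real (fm \<omega>) * iexp (t * Z \<omega>) \<partial>M) / complex_of_real m"
        by (simp only: gen)
      also have "\<dots> = (\<integral>\<omega>. complex_of_real (gm \<omega>) * iexp (t * Z \<omega>) \<partial>M)"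
        by (simp add: gm_def divide_simps mult_ac)
      also have "\<dots> = char (distr (density M gm) borel Z) t"
        by (rule char_density_distr[OF gi(2) gn(2), symmetric]) simp
      finally show "char (distr (density M gp) borel Z) t = char (distr (density M gm) borel Z) t" .
    qed
    then have eq: "distr (density M gp) borel Z = distr (density M gm) borel Z"
      using Levy_uniqueness[OF rp rm] by simp
    have ind: "(\<integral>x. (indicator C x :: real) \<partial>distr (density M g) borel Z) = (\<integral>\<omega>. g \<omega> * indicator C (Z \<omega>) \<partial>M)"
      if "g \<in> borel_measurable M" "\<And>\<omega>. g \<omega> \<ge> 0" for g :: "'a \<Rightarrow> real"
    proof -
      have "(\<integral>x. (indicator C x :: real) \<partial>distr (density M g) borel Z) = (\<integral>\<omega>. indicator C (Z \<omega>) \<partial>density M g)"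
        by (rule integral_distr[where f="indicator C" and g=Z]) simp_all
      also have "\<dots> = (\<integral>\<omega>. g \<omega> *\<^sub>R indicator C (Z \<omega>) \<partial>M)"
        by (rule integral_density) (measurable, simp_all add: that)
      finally show ?thesis by simp
    qed
    have "(\<integral>\<omega>. gp \<omega> * indicator C (Z \<omega>) \<partial>M) = (\<integral>\<omega>. gm \<omega> * indicator C (Z \<omega>) \<partial>M)"
      using ind[of gp] ind[of gm] eq gn gi by auto
    then have "(\<integral>\<omega>. fp \<omega> * indicator C (Z \<omega>) \<partial>M) / m = (\<integral>\<omega>. fm \<omega> * indicator C (Z \<omega>) \<partial>M) / m"
      by (simp add: gp_def gm_def)
    then show ?thesis using split mpos by simp
  qed
qed

lemma integrable_bounded_cmult':
  fixes f h :: "'a \<Rightarrow> complex"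
  assumes "integrable M f" "h \<in> borel_measurable M" "\<And>\<omega>. norm (h \<omega>) \<le> 1"
  shows "integrable M (\<lambda>\<omega>. f \<omega> * h \<omega>)"
proof (rule Bochner_Integration.integrable_bound[where f=f])
  show "integrable M f" by fact
  have [measurable]: "f \<in> borel_measurable M" "h \<in> borel_measurable M"
    using assms(1,2) by auto
  show "(\<lambda>\<omega>. f \<omega> * h \<omega>) \<in> borel_measurable M" by measurable
  show "AE \<omega> in M. norm (f \<omega> * h \<omega>) \<le> norm (f \<omega>)"
    using assms(3) by (auto simp: norm_mult intro!: mult_left_le)
qed

lemma cnj_iexp: "cnj (iexp x) = iexp (- x)"
  by (simp add: exp_cnj)

lemma re_iexp: "complex_of_real (Re z) * iexp a = (z * iexp a + cnj (z * iexp (- a))) / 2"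
proof -
  have 1: "cnj (z * iexp (- a)) = cnj z * iexp a"
    by (simp only: complex_cnj_mult cnj_iexp minus_minus)
  have 2: "complex_of_real (Re z) = (z + cnj z) / 2" by (simp add: complex_add_cnj)
  show ?thesis unfolding 1 2 by (simp add: field_simps)
qed

lemma im_iexp: "complex_of_real (Im z) * iexp a = (z * iexp a - cnj (z * iexp (- a))) / (2 * \<i>)"
proof -
  have 1: "cnj (z * iexp (- a)) = cnj z * iexp a"
    by (simp only: complex_cnj_mult cnj_iexp minus_minus)
  have 2: "complex_of_real (Im z) = (z - cnj z) / (2 * \<i>)" by (simp add: complex_eq_iff)
  show ?thesis unfolding 1 2 by (simp add: field_simps)
qed

lemma (in prob_space) fourier_unique_complex:
  fixes f :: "'a \<Rightarrow> complex" and Z :: "'a \<Rightarrow> real"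
  assumes f: "integrable M f" and Zm[measurable]: "Z \<in> borel_measurable M"
    and h: "\<And>u. (\<integral>\<omega>. f \<omega> * iexp (u * Z \<omega>) \<partial>M) = 0"
    and C[measurable]: "C \<in> sets borel"
  shows "(\<integral>\<omega>. f \<omega> * indicator C (Z \<omega>) \<partial>M) = 0"
proof -
  have [measurable]: "f \<in> borel_measurable M" using f by auto
  have fi: "integrable M (\<lambda>\<omega>. f \<omega> * iexp (u * Z \<omega>))" for u
    by (rule integrable_bounded_cmult'[OF f]) auto
  have fci: "integrable M (\<lambda>\<omega>. cnj (f \<omega> * iexp (u * Z \<omega>)))" for u
    using integrable_cnj[OF fi[of u]] .
  have re: "(\<integral>\<omega>. complex_of_real (Re (f \<omega>)) * iexp (u * Z \<omega>) \<partial>M) = 0" for u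
  proof -
    have eq: "(\<lambda>\<omega>. complex_of_real (Re (f \<omega>)) * iexp (u * Z \<omega>)) =
      (\<lambda>\<omega>. (f \<omega> * iexp (u * Z \<omega>) + cnj (f \<omega> * iexp ((- u) * Z \<omega>))) / 2)"
      by (rule ext) (simp only: re_iexp minus_mult_left)
    have "(\<integral>\<omega>. complex_of_real (Re (f \<omega>)) * iexp (u * Z \<omega>) \<partial>M) =
      (\<integral>\<omega>. (f \<omega> * iexp (u * Z \<omega>) + cnj (f \<omega> * iexp ((- u) * Z \<omega>))) / 2 \<partial>M)"
      unfolding eq ..
    also have "\<dots> = ((\<integral>\<omega>. f \<omega> * iexp (u * Z \<omega>) \<partial>M) + cnj (\<integral>\<omega>. f \<omega> * iexp ((- u) * Z \<omega>) \<partial>M)) / 2"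
      by (simp only: integral_divide_zero Bochner_Integration.integral_add[OF fi[of u] fci[of "-u"]] Bochner_Integration.integral_cnj)
    also have "\<dots> = 0" by (simp only: h complex_cnj_zero) simp
    finally show ?thesis .
  qed
  have im: "(\<integral>\<omega>. complex_of_real (Im (f \<omega>)) * iexp (u * Z \<omega>) \<partial>M) = 0" for u
  proof -
    have eq: "(\<lambda>\<omega>. complex_of_real (Im (f \<omega>)) * iexp (u * Z \<omega>)) =
      (\<lambda>\<omega>. (f \<omega> * iexp (u * Z \<omega>) - cnj (f \<omega> * iexp ((- u) * Z \<omega>))) / (2 * \<i>))"
      by (rule ext) (simp only: im_iexp minus_mult_left)
    have "(\<integral>\<omega>. complex_of_real (Im (f \<omega>)) * iexp (u * Z \<omega>) \<partial>M) =
      (\<integral>\<omega>. (f \<omega> * iexp (u * Z \<omega>) - cnj (f \<omega> * iexp ((- u) * Z \<omega>))) / (2 * \<i>) \<partial>M)"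
      unfolding eq ..
    also have "\<dots> = ((\<integral>\<omega>. f \<omega> * iexp (u * Z \<omega>) \<partial>M) - cnj (\<integral>\<omega>. f \<omega> * iexp ((- u) * Z \<omega>) \<partial>M)) / (2 * \<i>)"
      by (simp only: integral_divide_zero Bochner_Integration.integral_diff[OF fi[of u] fci[of "-u"]] Bochner_Integration.integral_cnj)
    also have "\<dots> = 0" by (simp only: h complex_cnj_zero) simp
    finally show ?thesis .
  qed
  have ri: "integrable M (\<lambda>\<omega>. Re (f \<omega>))" "integrable M (\<lambda>\<omega>. Im (f \<omega>))"
    using f by auto
  have r0: "(\<integral>\<omega>. Re (f \<omega>) * indicator C (Z \<omega>) \<partial>M) = 0"
    by (rule fourier_unique_real[OF ri(1) Zm re C])
  have i0: "(\<integral>\<omega>. Im (f \<omega>) * indicator C (Z \<omega>) \<partial>M) = 0"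
    by (rule fourier_unique_real[OF ri(2) Zm im C])
  have ii: "integrable M (\<lambda>\<omega>. f \<omega> * indicator C (Z \<omega>))"
    by (rule integrable_bounded_cmult'[OF f]) (auto simp: indicator_def)
   have "Re (\<integral>\<omega>. f \<omega> * indicator C (Z \<omega>) \<partial>M) = 0"
  proof -
    have "Re (\<integral>\<omega>. f \<omega> * indicator C (Z \<omega>) \<partial>M) = (\<integral>\<omega>. Re (f \<omega> * indicator C (Z \<omega>)) \<partial>M)"
      using integral_Re[OF ii] by simp
    also have "\<dots> = (\<integral>\<omega>. Re (f \<omega>) * indicator C (Z \<omega>) \<partial>M)"
      by (rule Bochner_Integration.integral_cong) (auto simp: indicator_def)
    finally show ?thesis using r0 by simp
  qed
  moreover have "Im (\<integral>\<omega>. f \<omega> * indicator C (Z \<omega>) \<partial>M) = 0"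
  proof -
    have "Im (\<integral>\<omega>. f \<omega> * indicator C (Z \<omega>) \<partial>M) = (\<integral>\<omega>. Im (f \<omega> * indicator C (Z \<omega>)) \<partial>M)"
      using integral_Im[OF ii] by simp
    also have "\<dots> = (\<integral>\<omega>. Im (f \<omega>) * indicator C (Z \<omega>) \<partial>M)"
      by (rule Bochner_Integration.integral_cong) (auto simp: indicator_def)
    finally show ?thesis using i0 by simp
  qed
  ultimately show ?thesis by (simp add: complex_eq_iff)
qed

lemma normal_density_mono_abs:
  assumes "\<sigma> > 0" "\<bar>a\<bar> \<le> \<bar>b\<bar>"
  shows "normal_density 0 \<sigma> b \<le> normal_density 0 \<sigma> a"
proof -
  have "a\<^sup>2 \<le> b\<^sup>2" using assms(2) by (simp add: abs_le_square_iff)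
  then have "- b\<^sup>2 / (2 * \<sigma>\<^sup>2) \<le> - a\<^sup>2 / (2 * \<sigma>\<^sup>2)" using assms(1)
    by (intro divide_right_mono) auto
  then show ?thesis unfolding normal_density_def
    by (intro mult_left_mono) auto
qed

lemma (in prob_space) normal_anderson:
  assumes D: "distributed M lborel Y (normal_density 0 \<sigma>)" and \<sigma>: "\<sigma> > 0" and x: "x > 0"
  shows "prob {\<omega> \<in> space M. \<bar>Y \<omega> + w\<bar> < x} \<le> prob {\<omega> \<in> space M. \<bar>Y \<omega>\<bar> < x}"
proof -
  define f where "f y = ennreal (normal_density 0 \<sigma> y)" for y
  define I where "I = {y::real. \<bar>y\<bar> < x}"
  define J where "J = {y::real. \<bar>y + w\<bar> < x}"
  have I': "I = {-x<..<x}" unfolding I_def by auto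
  have J': "J = {-x-w<..<x-w}" unfolding J_def by auto
  have [measurable]: "I \<in> sets borel" "J \<in> sets borel" unfolding I' J' by auto
  have fm[measurable]: "f \<in> borel_measurable borel" unfolding f_def by measurable
  have Ym[measurable]: "Y \<in> borel_measurable M"
    using D distributed_measurable by (metis measurable_lborel1)
  have PI: "emeasure M {\<omega> \<in> space M. \<bar>Y \<omega>\<bar> < x} = (\<integral>\<^sup>+y. f y * indicator I y \<partial>lborel)"
  proof -
    have "{\<omega> \<in> space M. \<bar>Y \<omega>\<bar> < x} = Y -` I \<inter> space M" unfolding I_def by auto
    then show ?thesis using distributed_emeasure[OF D, of I] by (simp add: f_def)
  qed
  have PJ: "emeasure M {\<omega> \<in> space M. \<bar>Y \<omega> + w\<bar> < x} = (\<integral>\<^sup>+y. f y * indicator J y \<partial>lborel)"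
  proof -
    have "{\<omega> \<in> space M. \<bar>Y \<omega> + w\<bar> < x} = Y -` J \<inter> space M" unfolding J_def by auto
    then show ?thesis using distributed_emeasure[OF D, of J] by (simp add: f_def)
  qed
  have split: "(\<integral>\<^sup>+y. f y * indicator S y \<partial>lborel) =
      (\<integral>\<^sup>+y. f y * indicator (S \<inter> T) y \<partial>lborel) + (\<integral>\<^sup>+y. f y * indicator (S - T) y \<partial>lborel)"
    if [measurable]: "S \<in> sets borel" "T \<in> sets borel" for S T
  proof -
    have "(\<integral>\<^sup>+y. f y * indicator S y \<partial>lborel) =
      (\<integral>\<^sup>+y. f y * indicator (S \<inter> T) y + f y * indicator (S - T) y \<partial>lborel)"
      by (rule nn_integral_cong) (auto split: split_indicator)
    also have "\<dots> = (\<integral>\<^sup>+y. f y * indicator (S \<inter> T) y \<partial>lborel) + (\<integral>\<^sup>+y. f y * indicator (S - T) y \<partial>lborel)"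
      by (rule nn_integral_add) measurable
    finally show ?thesis .
  qed
  define c where "c = f x"
  have up: "(\<integral>\<^sup>+y. f y * indicator (J - I) y \<partial>lborel) \<le> c * emeasure lborel (J - I)"
  proof -
    have "(\<integral>\<^sup>+y. f y * indicator (J - I) y \<partial>lborel) \<le> (\<integral>\<^sup>+y. c * indicator (J - I) y \<partial>lborel)"
    proof (rule nn_integral_mono)
      fix y show "f y * indicator (J - I) y \<le> c * indicator (J - I) y"
      proof (cases "y \<in> J - I")
        case True
        then have "\<bar>x\<bar> \<le> \<bar>y\<bar>" using x by (auto simp: I_def)
        then have "f y \<le> c" unfolding c_def f_def
          by (intro ennreal_leI normal_density_mono_abs[OF \<sigma>])
        then show ?thesis using True by simp
      qed simp
    qed
    also have "\<dots> = c * emeasure lborel (J - I)"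
      by (rule nn_integral_cmult_indicator) measurable
    finally show ?thesis .
  qed
  have lo: "c * emeasure lborel (I - J) \<le> (\<integral>\<^sup>+y. f y * indicator (I - J) y \<partial>lborel)"
  proof -
    have "c * emeasure lborel (I - J) = (\<integral>\<^sup>+y. c * indicator (I - J) y \<partial>lborel)"
      by (rule nn_integral_cmult_indicator[symmetric]) measurable
    also have "\<dots> \<le> (\<integral>\<^sup>+y. f y * indicator (I - J) y \<partial>lborel)"
    proof (rule nn_integral_mono)
      fix y show "c * indicator (I - J) y \<le> f y * indicator (I - J) y"
      proof (cases "y \<in> I - J")
        case True
        then have "\<bar>y\<bar> \<le> \<bar>x\<bar>" using x by (auto simp: I_def)
        then have "c \<le> f y" unfolding c_def f_def
          by (intro ennreal_leI normal_density_mono_abs[OF \<sigma>])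
        then show ?thesis using True by simp
      qed simp
    qed
    finally show ?thesis .
  qed
  have eqm: "emeasure lborel (J - I) = emeasure lborel (I - J)"
  proof -
    have "emeasure lborel (J \<inter> I) + emeasure lborel (J - I) = emeasure lborel J"
      by (subst plus_emeasure) (auto intro!: arg_cong[where f="emeasure lborel"])
    also have "\<dots> = ennreal (2 * x)" unfolding J' using x by simp
    also have "\<dots> = emeasure lborel I" unfolding I' using x by simp
    also have "\<dots> = emeasure lborel (J \<inter> I) + emeasure lborel (I - J)"
      by (subst plus_emeasure) (auto intro!: arg_cong[where f="emeasure lborel"])
    finally have "emeasure lborel (J \<inter> I) + emeasure lborel (J - I) =
                  emeasure lborel (J \<inter> I) + emeasure lborel (I - J)" .
    moreover have "emeasure lborel (J \<inter> I) \<noteq> \<infinity>"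
    proof -
      have "emeasure lborel (J \<inter> I) \<le> emeasure lborel I" by (rule emeasure_mono) auto
      also have "\<dots> < \<infinity>" unfolding I' using x by simp
      finally show ?thesis by simp
    qed
    ultimately show ?thesis by (simp add: ennreal_add_left_cancel)
  qed
  have "emeasure M {\<omega> \<in> space M. \<bar>Y \<omega> + w\<bar> < x} \<le> emeasure M {\<omega> \<in> space M. \<bar>Y \<omega>\<bar> < x}"
  proof -
    have "emeasure M {\<omega> \<in> space M. \<bar>Y \<omega> + w\<bar> < x} =
       (\<integral>\<^sup>+y. f y * indicator (J \<inter> I) y \<partial>lborel) + (\<integral>\<^sup>+y. f y * indicator (J - I) y \<partial>lborel)"
      unfolding PJ by (rule split) auto
    also have "\<dots> \<le> (\<integral>\<^sup>+y. f y * indicator (I \<inter> J) y \<partial>lborel) + (\<integral>\<^sup>+y. f y * indicator (I - J) y \<partial>lborel)"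
      using up lo eqm by (simp add: Int_commute add_left_mono)
    also have "\<dots> = emeasure M {\<omega> \<in> space M. \<bar>Y \<omega>\<bar> < x}"
      unfolding PI by (rule split[symmetric]) auto
    finally show ?thesis .
  qed
  then show ?thesis by (simp add: emeasure_eq_measure)
qed

definition ev :: "nat \<Rightarrow> nat \<Rightarrow> real" where "ev j = (\<lambda>i. if i = j then 1 else 0)"

locale bilin =
  fixes B :: "(nat \<Rightarrow> real) \<Rightarrow> (nat \<Rightarrow> real) \<Rightarrow> real"
  assumes add: "B (\<lambda>i. c i + d i) e = B c e + B d e"
    and smult: "B (\<lambda>i. r * c i) e = r * B c e"
    and sym: "B c d = B d c"
    and psd: "B c c \<ge> 0"
begin

lemma zero: "B (\<lambda>i. 0) e = 0"
  using smult[of 0 e e] by simp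

lemma diff: "B (\<lambda>i. c i - d i) e = B c e - B d e"
proof -
  have "B (\<lambda>i. c i - d i) e = B (\<lambda>i. c i + (-1) * d i) e" by simp
  also have "\<dots> = B c e + B (\<lambda>i. (-1) * d i) e" by (rule add)
  also have "\<dots> = B c e - B d e" using smult[of "-1" d e] by simp
  finally show ?thesis .
qed

lemma add2: "B e (\<lambda>i. c i + d i) = B e c + B e d"
  using add[of c d e] sym by metis

lemma smult2: "B e (\<lambda>i. r * c i) = r * B e c"
  using smult[of r c e] sym by metis

lemma diff2: "B e (\<lambda>i. c i - d i) = B e c - B e d"
  using diff[of c d e] sym by metis

lemma sum: "finite S \<Longrightarrow> B (\<lambda>i. \<Sum>j\<in>S. f j i) e = (\<Sum>j\<in>S. B (f j) e)"
proof (induction S rule: finite_induct)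
  case empty then show ?case by (simp add: zero)
next
  case (insert x F)
  then show ?case by (simp add: add)
qed

lemma expand:
  assumes "finite S" "\<And>i. i \<notin> S \<Longrightarrow> c i = 0"
  shows "B c e = (\<Sum>j\<in>S. c j * B (ev j) e)"
proof -
  have "c = (\<lambda>i. \<Sum>j\<in>S. c j * ev j i)"
  proof
    fix i
    show "c i = (\<Sum>j\<in>S. c j * ev j i)"
      using assms by (cases "i \<in> S") (simp_all add: ev_def if_distrib cong: if_cong)
  qed
  then have "B c e = B (\<lambda>i. \<Sum>j\<in>S. c j * ev j i) e" by simp
  also have "\<dots> = (\<Sum>j\<in>S. B (\<lambda>i. c j * ev j i) e)" by (rule sum[OF assms(1)])
  also have "\<dots> = (\<Sum>j\<in>S. c j * B (ev j) e)" by (simp add: smult)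
  finally show ?thesis .
qed

lemma null:
  assumes "B c c = 0"
  shows "B c d = 0"
proof -
  define b where "b = B c d"
  define D where "D = B d d"
  have D0: "D \<ge> 0" unfolding D_def by (rule psd)
  define t where "t = - b / (1 + D)"
  have "0 \<le> B (\<lambda>i. c i + t * d i) (\<lambda>i. c i + t * d i)" by (rule psd)
  also have "\<dots> = B c c + 2 * t * b + t^2 * D"
    by (simp add: add add2 smult smult2 b_def D_def sym[of d c] power2_eq_square algebra_simps)
  finally have h0: "0 \<le> 2 * t * b + t^2 * D" using assms by simp
  have tt: "t * (1 + D) = - b" using D0 by (simp add: t_def field_simps)
  have "(1 + D)^2 * (2 * t * b + t^2 * D) = 2 * b * (t * (1 + D)) * (1 + D) + (t * (1 + D))^2 * D"
    by (simp add: algebra_simps power2_eq_square)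
  also have "\<dots> = b^2 * (- 2 - D)" unfolding tt by (simp add: algebra_simps power2_eq_square)
  finally have "0 \<le> b^2 * (- 2 - D)" using h0 by (metis zero_le_mult_iff zero_le_power2)
  moreover have "- 2 - D < 0" using D0 by simp
  ultimately have "b^2 \<le> 0" by (simp add: zero_le_mult_iff)
  then show ?thesis unfolding b_def by simp
qed

lemma gram_schmidt:
  "\<exists>a. (\<forall>i\<ge>k. a i = 0) \<and> (\<forall>j<k. B (\<lambda>i. t i - a i) (ev j) = 0)"
proof (induction k arbitrary: t)
  case 0
  show ?case by (rule exI[of _ "\<lambda>i. 0"]) simp
next
  case (Suc k)
  obtain a where a0: "\<forall>i\<ge>k. a i = 0" and a1: "\<forall>j<k. B (\<lambda>i. t i - a i) (ev j) = 0"
    using Suc.IH[of t] by blast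
  obtain b where b0: "\<forall>i\<ge>k. b i = 0" and b1: "\<forall>j<k. B (\<lambda>i. ev k i - b i) (ev j) = 0"
    using Suc.IH[of "ev k"] by blast
  define R where "R = (\<lambda>i. t i - a i)"
  define E where "E = (\<lambda>i. ev k i - b i)"
  have orthb: "B c b = 0" if "\<forall>j<k. B c (ev j) = 0" for c
  proof -
    have "B b c = (\<Sum>j\<in>{..<k}. b j * B (ev j) c)"
      by (rule expand) (use b0 in auto)
    also have "\<dots> = 0" using that by (simp add: sym)
    finally show ?thesis by (simp add: sym)
  qed
  have evk: "ev k = (\<lambda>i. E i + b i)" by (simp add: E_def)
  have orthk: "B c (ev k) = B c E" if "\<forall>j<k. B c (ev j) = 0" for c
    using orthb[OF that] by (simp add: evk add2)
  show ?case
  proof (cases "B E E = 0")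
    case True
    have "B R (ev k) = 0" using orthk[of R] a1 null[OF True, of R] by (simp add: R_def sym)
    then show ?thesis using a0 a1 unfolding R_def
      by (intro exI[of _ a]) (auto simp: less_Suc_eq)
  next
    case False
    define l where "l = B R E / B E E"
    define a' where "a' = (\<lambda>i. a i + l * E i)"
    have E0: "\<forall>i\<ge>Suc k. E i = 0" using b0 by (simp add: E_def ev_def)
    have R': "(\<lambda>i. t i - a' i) = (\<lambda>i. R i - l * E i)" by (simp add: a'_def R_def algebra_simps)
    have o1: "\<forall>j<k. B (\<lambda>i. R i - l * E i) (ev j) = 0"
      using a1 b1 by (simp add: diff smult R_def E_def)
    have "B (\<lambda>i. R i - l * E i) E = B R E - l * B E E" by (simp only: diff smult)
    then have o2: "B (\<lambda>i. R i - l * E i) E = 0"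
      using False by (simp add: l_def)
    have o3: "B (\<lambda>i. R i - l * E i) (ev k) = 0"
      using orthk[OF o1] o2 by simp
    show ?thesis
    proof (intro exI[of _ a'] conjI allI impI)
      fix i assume "Suc k \<le> i" then show "a' i = 0" using a0 E0 by (simp add: a'_def)
    next
      fix j assume "j < Suc k"
      then show "B (\<lambda>i. t i - a' i) (ev j) = 0"
        unfolding R' using o1 o3 by (auto simp: less_Suc_eq)
    qed
  qed
qed

end

definition gauss :: "'a measure \<Rightarrow> ('a \<Rightarrow> real) \<Rightarrow> bool" where
  "gauss M Z \<longleftrightarrow> Z \<in> borel_measurable M \<and> ((AE \<omega> in M. Z \<omega> = 0) \<or>
     (\<exists>\<sigma>>0. distributed M lborel Z (normal_density 0 \<sigma>)))"

lemma (in prob_space) gauss_props: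
  assumes g: "gauss M Z"
  shows "integrable M (\<lambda>\<omega>. (Z \<omega>)\<^sup>2)" "integrable M Z" "expectation Z = 0"
    "expectation (\<lambda>\<omega>. iexp (Z \<omega>)) = complex_of_real (exp (- expectation (\<lambda>\<omega>. (Z \<omega>)\<^sup>2) / 2))"
proof -
  have Zm[measurable]: "Z \<in> borel_measurable M" using g by (simp add: gauss_def)
  have "integrable M (\<lambda>\<omega>. (Z \<omega>)\<^sup>2) \<and> integrable M Z \<and> expectation Z = 0 \<and>
    expectation (\<lambda>\<omega>. iexp (Z \<omega>)) = complex_of_real (exp (- expectation (\<lambda>\<omega>. (Z \<omega>)\<^sup>2) / 2))"
  proof (cases "AE \<omega> in M. Z \<omega> = 0")
    case True
    have i1: "integrable M (\<lambda>\<omega>. (Z \<omega>)\<^sup>2)"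
      by (subst integrable_cong_AE[where g="\<lambda>_. 0"]) (use True in auto)
    have i2: "integrable M Z"
      by (subst integrable_cong_AE[where g="\<lambda>_. 0"]) (use True in auto)
    have e1: "expectation Z = 0"
      by (subst integral_cong_AE[where g="\<lambda>_. 0"]) (use True in auto)
    have e2: "expectation (\<lambda>\<omega>. (Z \<omega>)\<^sup>2) = 0"
      by (subst integral_cong_AE[where g="\<lambda>_. 0"]) (use True in auto)
    have e3: "expectation (\<lambda>\<omega>. iexp (Z \<omega>)) = 1"
      by (subst integral_cong_AE[where g="\<lambda>_. 1"]) (use True in \<open>auto simp: prob_space\<close>)
    show ?thesis using i1 i2 e1 e2 e3 by simp
  next
    case False
    then obtain \<sigma> where \<sigma>: "\<sigma> > 0" and D: "distributed M lborel Z (normal_density 0 \<sigma>)"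
      using g by (auto simp: gauss_def)
    have i1: "integrable M (\<lambda>\<omega>. (Z \<omega>)\<^sup>2)"
      using distributed_integrable[OF D, of "\<lambda>x. x\<^sup>2"] integrable_normal_moment[where \<mu>=0 and \<sigma>=\<sigma> and k=2] \<sigma> by simp
    have i2: "integrable M Z"
      using distributed_integrable[OF D, of "\<lambda>x. x"] integrable_normal_moment[where \<mu>=0 and \<sigma>=\<sigma> and k=1] \<sigma> by simp
    have e1: "expectation Z = 0" by (rule normal_distributed_expectation[OF \<sigma> D])
    have e2: "expectation (\<lambda>\<omega>. (Z \<omega>)\<^sup>2) = \<sigma>\<^sup>2"
      using normal_distributed_variance[OF \<sigma> D] e1 by simp
    have D1: "distributed M lborel (\<lambda>\<omega>. (Z \<omega> - 0) / \<sigma>) std_normal_density"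
      using normal_standard_normal_convert[OF \<sigma>, of Z 0] D by simp
    then have dd: "distr M lborel (\<lambda>\<omega>. Z \<omega> / \<sigma>) = std_normal_distribution"
      by (simp add: distributed_def)
    have "char (distr M lborel (\<lambda>\<omega>. Z \<omega> / \<sigma>)) \<sigma> = (\<integral>\<omega>. iexp (\<sigma> * (Z \<omega> / \<sigma>)) \<partial>M)"
      unfolding char_def by (rule integral_distr) (simp_all)
    also have "\<dots> = expectation (\<lambda>\<omega>. iexp (Z \<omega>))" using \<sigma> by simp
    finally have e3: "expectation (\<lambda>\<omega>. iexp (Z \<omega>)) = complex_of_real (exp (- (\<sigma>^2) / 2))"
      unfolding dd char_std_normal_distribution by simp
    show ?thesis using i1 i2 e1 e2 e3 by simp
  qed
  then show "integrable M (\<lambda>\<omega>. (Z \<omega>)\<^sup>2)" "integrable M Z" "expectation Z = 0"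
    "expectation (\<lambda>\<omega>. iexp (Z \<omega>)) = complex_of_real (exp (- expectation (\<lambda>\<omega>. (Z \<omega>)\<^sup>2) / 2))"
    by auto
qed

locale cgauss = prob_space +
  fixes N :: nat and X :: "nat \<Rightarrow> 'a \<Rightarrow> real"
  assumes cgv: "centered_gaussian_vector M N X"
begin

definition lin :: "(nat \<Rightarrow> real) \<Rightarrow> 'a \<Rightarrow> real" where
  "lin c \<omega> = (\<Sum>i\<le>N. c i * X i \<omega>)"

lemma Xm: "i \<le> N \<Longrightarrow> X i \<in> borel_measurable M"
  using cgv by (simp add: centered_gaussian_vector_def)

lemma lin_meas[measurable]: "lin c \<in> borel_measurable M"
  unfolding lin_def[abs_def] using Xm by (intro borel_measurable_sum borel_measurable_times) auto

lemma gauss_lin: "gauss M (lin c)"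
  using cgv lin_meas unfolding gauss_def centered_gaussian_vector_def lin_def[abs_def] by blast

lemma lin_add: "lin (\<lambda>i. c i + d i) \<omega> = lin c \<omega> + lin d \<omega>"
  by (simp add: lin_def sum.distrib algebra_simps)

lemma lin_diff: "lin (\<lambda>i. c i - d i) \<omega> = lin c \<omega> - lin d \<omega>"
  by (simp add: lin_def sum_subtractf algebra_simps)

lemma lin_smult: "lin (\<lambda>i. r * c i) \<omega> = r * lin c \<omega>"
  by (simp add: lin_def sum_distrib_left algebra_simps)

lemma lin_ev: "i \<le> N \<Longrightarrow> lin (ev i) \<omega> = X i \<omega>"
proof -
  assume "i \<le> N"
  have "lin (ev i) \<omega> = (\<Sum>j\<le>N. (if j = i then X i \<omega> else 0))"
    unfolding lin_def ev_def by (rule sum.cong) auto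
  then show ?thesis using \<open>i \<le> N\<close> by simp
qed

lemma lin_sq_int: "integrable M (\<lambda>\<omega>. (lin c \<omega>)\<^sup>2)"
  using gauss_props(1)[OF gauss_lin] .

lemma lin_int: "integrable M (lin c)"
  using gauss_props(2)[OF gauss_lin] .

lemma lin_prod_int: "integrable M (\<lambda>\<omega>. lin c \<omega> * lin d \<omega>)"
proof -
  have "(\<lambda>\<omega>. lin c \<omega> * lin d \<omega>) =
     (\<lambda>\<omega>. ((lin (\<lambda>i. c i + d i) \<omega>)\<^sup>2 - (lin (\<lambda>i. c i - d i) \<omega>)\<^sup>2) / 4)"
    by (simp add: lin_add lin_diff power2_eq_square algebra_simps)
  then show ?thesis using lin_sq_int by simp
qed

definition Bf :: "(nat \<Rightarrow> real) \<Rightarrow> (nat \<Rightarrow> real) \<Rightarrow> real" where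
  "Bf c d = expectation (\<lambda>\<omega>. lin c \<omega> * lin d \<omega>)"

sublocale bl: bilin Bf
proof
  fix c d e :: "nat \<Rightarrow> real" and r :: real
  show "Bf (\<lambda>i. c i + d i) e = Bf c e + Bf d e"
    unfolding Bf_def lin_add distrib_right
    by (rule Bochner_Integration.integral_add[OF lin_prod_int lin_prod_int])
  show "Bf (\<lambda>i. r * c i) e = r * Bf c e"
    unfolding Bf_def lin_smult by (simp add: mult.assoc)
  show "Bf c d = Bf d c" unfolding Bf_def by (simp add: mult.commute)
  show "Bf c c \<ge> 0" unfolding Bf_def by (rule integral_nonneg_AE) simp
qed

lemma Bf_sq: "Bf c c = expectation (\<lambda>\<omega>. (lin c \<omega>)\<^sup>2)"
  by (simp add: Bf_def power2_eq_square)

lemma lin_char: "expectation (\<lambda>\<omega>. iexp (lin c \<omega>)) = complex_of_real (exp (- Bf c c / 2))"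
  using gauss_props(4)[OF gauss_lin] Bf_sq by simp

end

lemma iexp_add: "iexp (a + b) = iexp a * iexp b"
  by (simp add: distrib_left exp_add)

context cgauss begin

definition coef :: "nat \<Rightarrow> real" where
  "coef = (SOME a. (\<forall>i\<ge>N. a i = 0) \<and> (\<forall>j<N. Bf (\<lambda>i. ev N i - a i) (ev j) = 0))"

lemma coef: "\<forall>i\<ge>N. coef i = 0" "\<forall>j<N. Bf (\<lambda>i. ev N i - coef i) (ev j) = 0"
  using someI_ex[OF bl.gram_schmidt[of N "ev N"]] unfolding coef_def by blast+

definition dY :: "nat \<Rightarrow> real" where "dY = (\<lambda>i. ev N i - coef i)"
definition Y :: "'a \<Rightarrow> real" where "Y = lin dY"

lemma Y_meas[measurable]: "Y \<in> borel_measurable M"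
  unfolding Y_def by simp

lemma Y_orth:
  assumes "\<And>i. i \<ge> N \<Longrightarrow> c i = 0"
  shows "Bf dY c = 0"
proof -
  have "Bf c dY = (\<Sum>j\<in>{..<N}. c j * Bf (ev j) dY)"
    by (rule bl.expand) (use assms in auto)
  also have "\<dots> = 0" using coef(2) by (simp add: dY_def bl.sym)
  finally show ?thesis by (simp add: bl.sym)
qed

lemma Y_alt: "Y \<omega> = X N \<omega> - (\<Sum>i<N. coef i * X i \<omega>)"
proof -
  have "Y \<omega> = lin (ev N) \<omega> - lin coef \<omega>" unfolding Y_def dY_def by (rule lin_diff)
  also have "lin coef \<omega> = (\<Sum>i<N. coef i * X i \<omega>)"
    unfolding lin_def using coef(1) by (simp add: lessThan_Suc_atMost[symmetric])
  finally show ?thesis by (simp add: lin_ev)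
qed

lemma char_factor:
  assumes "\<And>i. i \<ge> N \<Longrightarrow> t i = 0"
  shows "expectation (\<lambda>\<omega>. iexp (s * Y \<omega> + lin t \<omega>)) =
         expectation (\<lambda>\<omega>. iexp (lin t \<omega>)) * expectation (\<lambda>\<omega>. iexp (s * Y \<omega>))"
proof -
  have o: "Bf dY t = 0" by (rule Y_orth) (use assms in auto)
  have e1: "s * Y \<omega> + lin t \<omega> = lin (\<lambda>i. s * dY i + t i) \<omega>" for \<omega>
    by (simp add: Y_def lin_add lin_smult)
  have e2: "s * Y \<omega> = lin (\<lambda>i. s * dY i) \<omega>" for \<omega>
    by (simp add: Y_def lin_smult)
  have b1: "Bf (\<lambda>i. s * dY i + t i) (\<lambda>i. s * dY i + t i) = s^2 * Bf dY dY + Bf t t"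
    using o by (simp add: bl.add bl.add2 bl.smult bl.smult2 bl.sym[of t dY] power2_eq_square algebra_simps)
  have b2: "Bf (\<lambda>i. s * dY i) (\<lambda>i. s * dY i) = s^2 * Bf dY dY"
    by (simp add: bl.smult bl.smult2 power2_eq_square)
  have l1: "expectation (\<lambda>\<omega>. iexp (s * Y \<omega> + lin t \<omega>)) = complex_of_real (exp (- (s^2 * Bf dY dY + Bf t t) / 2))"
    by (simp only: e1 lin_char b1)
  have l2: "expectation (\<lambda>\<omega>. iexp (s * Y \<omega>)) = complex_of_real (exp (- (s^2 * Bf dY dY) / 2))"
    by (simp only: e2 lin_char b2)
  have l3: "exp (- (s^2 * Bf dY dY + Bf t t) / 2) = exp (- Bf t t / 2) * exp (- (s^2 * Bf dY dY) / 2)"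
    by (simp add: exp_add[symmetric] field_simps)
  show ?thesis
    unfolding l1 l2 lin_char l3 by simp
qed

definition G :: "nat \<Rightarrow> (nat \<Rightarrow> real set) \<Rightarrow> 'a set" where
  "G k C = {\<omega> \<in> space M. \<forall>i<k. X i \<omega> \<in> C i}"

lemma G_0: "G 0 C = space M" by (simp add: G_def)

lemma G_Suc: "G (Suc k) C = G k C \<inter> (X k -` C k \<inter> space M)"
  by (auto simp: G_def less_Suc_eq)

lemma G_sets: "k \<le> N \<Longrightarrow> (\<And>i. C i \<in> sets borel) \<Longrightarrow> G k C \<in> sets M"
proof (induction k)
  case 0 then show ?case by (simp add: G_0)
next
  case (Suc k)
  have "X k -` C k \<inter> space M \<in> sets M"
    using Xm[of k] Suc.prems by (intro measurable_sets[of _ M borel]) auto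
  then show ?case using Suc by (simp add: G_Suc)
qed

definition P :: "nat \<Rightarrow> (nat \<Rightarrow> real) \<Rightarrow> 'a \<Rightarrow> real" where
  "P k t \<omega> = (\<Sum>j\<in>{k..<N}. t j * X j \<omega>)"

lemma P_meas[measurable]: "P k t \<in> borel_measurable M"
  unfolding P_def[abs_def] using Xm by (intro borel_measurable_sum borel_measurable_times) auto

lemma P_0: "P 0 t \<omega> = lin (\<lambda>j. if j < N then t j else 0) \<omega>"
  unfolding P_def lin_def by (simp add: lessThan_Suc_atMost[symmetric] atLeast0LessThan if_distrib cong: if_cong)

lemma P_split: "k < N \<Longrightarrow> P k (t(k := u)) \<omega> = u * X k \<omega> + P (Suc k) t \<omega>"
proof -
  assume "k < N"
  then have "{k..<N} = insert k {Suc k..<N}" by auto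
  moreover have "(\<Sum>j\<in>{Suc k..<N}. (t(k := u)) j * X j \<omega>) = (\<Sum>j\<in>{Suc k..<N}. t j * X j \<omega>)"
    by (rule sum.cong) auto
  ultimately show ?thesis unfolding P_def by simp
qed

lemma P_N: "P N t \<omega> = 0" by (simp add: P_def)

lemma bounded_int:
  fixes f :: "'a \<Rightarrow> complex"
  assumes "f \<in> borel_measurable M" "\<And>\<omega>. norm (f \<omega>) \<le> B"
  shows "integrable M f"
  using assms by (intro integrable_const_bound[where B=B]) auto

definition phi :: "real \<Rightarrow> complex" where
  "phi s = expectation (\<lambda>\<omega>. iexp (s * Y \<omega>))"

lemma norm_phi: "norm (phi s) \<le> 1"
proof -
  have "norm (phi s) \<le> expectation (\<lambda>\<omega>. norm (iexp (s * Y \<omega>)))"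
    unfolding phi_def by (rule integral_norm_bound)
  also have "\<dots> = 1" by (simp add: prob_space)
  finally show ?thesis .
qed

lemma Q:
  assumes "k \<le> N" "\<And>i. C i \<in> sets borel"
  shows "(\<integral>\<omega>. indicator (G k C) \<omega> * iexp (s * Y \<omega> + P k t \<omega>) \<partial>M) =
         (\<integral>\<omega>. indicator (G k C) \<omega> * iexp (P k t \<omega>) \<partial>M) * phi s"
  using assms
proof (induction k arbitrary: t)
  case 0
  have "(\<integral>\<omega>. indicator (G 0 C) \<omega> * iexp (s * Y \<omega> + P 0 t \<omega>) \<partial>M) =
        (\<integral>\<omega>. iexp (s * Y \<omega> + lin (\<lambda>j. if j < N then t j else 0) \<omega>) \<partial>M)"
    by (rule Bochner_Integration.integral_cong) (simp_all add: G_0 P_0)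
  also have "\<dots> = (\<integral>\<omega>. iexp (lin (\<lambda>j. if j < N then t j else 0) \<omega>) \<partial>M) * phi s"
    unfolding phi_def by (rule char_factor) simp
  also have "(\<integral>\<omega>. iexp (lin (\<lambda>j. if j < N then t j else 0) \<omega>) \<partial>M) =
        (\<integral>\<omega>. indicator (G 0 C) \<omega> * iexp (P 0 t \<omega>) \<partial>M)"
    by (rule Bochner_Integration.integral_cong) (simp_all add: G_0 P_0)
  finally show ?case .
next
  case (Suc k)
  have kN: "k < N" "k \<le> N" using Suc.prems by auto
  have Gk[measurable]: "G k C \<in> sets M" by (rule G_sets[OF kN(2) Suc.prems(2)])
  have GSk[measurable]: "G (Suc k) C \<in> sets M" by (rule G_sets[OF Suc.prems])
  have Xk[measurable]: "X k \<in> borel_measurable M" using Xm kN by simp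
  define f where "f \<omega> = indicator (G k C) \<omega> *
      (iexp (s * Y \<omega> + P (Suc k) t \<omega>) - phi s * iexp (P (Suc k) t \<omega>))" for \<omega>
  have fm[measurable]: "f \<in> borel_measurable M" unfolding f_def by measurable
  have fb: "norm (f \<omega>) \<le> 2" for \<omega>
  proof -
    have "norm (iexp (s * Y \<omega> + P (Suc k) t \<omega>) - phi s * iexp (P (Suc k) t \<omega>)) \<le> 1 + 1"
      using norm_triangle_ineq4[of "iexp (s * Y \<omega> + P (Suc k) t \<omega>)" "phi s * iexp (P (Suc k) t \<omega>)"]
        norm_phi[of s] by (simp add: norm_mult)
    then show ?thesis unfolding f_def by (simp add: norm_mult indicator_def)
  qed
  have fi: "integrable M f" by (rule bounded_int[OF fm fb])
  have h: "(\<integral>\<omega>. f \<omega> * iexp (u * X k \<omega>) \<partial>M) = 0" for u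
  proof -
    have i1: "integrable M (\<lambda>\<omega>. indicator (G k C) \<omega> * iexp (s * Y \<omega> + P k (t(k := u)) \<omega>))"
      by (rule bounded_int[where B=1]) (measurable, simp add: norm_mult indicator_def)
    have i2: "integrable M (\<lambda>\<omega>. phi s * (indicator (G k C) \<omega> * iexp (P k (t(k := u)) \<omega>)))"
      by (rule bounded_int[where B=1]) (measurable, use norm_phi[of s] in \<open>simp add: norm_mult indicator_def\<close>)
    have "(\<integral>\<omega>. f \<omega> * iexp (u * X k \<omega>) \<partial>M) =
      (\<integral>\<omega>. indicator (G k C) \<omega> * iexp (s * Y \<omega> + P k (t(k := u)) \<omega>) -
            phi s * (indicator (G k C) \<omega> * iexp (P k (t(k := u)) \<omega>)) \<partial>M)"
      by (rule Bochner_Integration.integral_cong)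
         (simp_all add: f_def P_split[OF kN(1)] exp_add distrib_left algebra_simps)
    also have "\<dots> = (\<integral>\<omega>. indicator (G k C) \<omega> * iexp (s * Y \<omega> + P k (t(k := u)) \<omega>) \<partial>M) -
            phi s * (\<integral>\<omega>. indicator (G k C) \<omega> * iexp (P k (t(k := u)) \<omega>) \<partial>M)"
      by (subst Bochner_Integration.integral_diff[OF i1 i2]) (simp only: integral_mult_right_zero)
    also have "\<dots> = 0" unfolding Suc.IH[OF kN(2) Suc.prems(2), of "t(k := u)"] by (simp add: mult.commute)
    finally show ?thesis .
  qed
  have z: "(\<integral>\<omega>. f \<omega> * indicator (C k) (X k \<omega>) \<partial>M) = 0"
    by (rule fourier_unique_complex[OF fi Xk h Suc.prems(2)])
  have i3: "integrable M (\<lambda>\<omega>. indicator (G (Suc k) C) \<omega> * iexp (s * Y \<omega> + P (Suc k) t \<omega>))"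
    by (rule bounded_int[where B=1]) (measurable, simp add: norm_mult indicator_def)
  have i4: "integrable M (\<lambda>\<omega>. phi s * (indicator (G (Suc k) C) \<omega> * iexp (P (Suc k) t \<omega>)))"
    by (rule bounded_int[where B=1]) (measurable, use norm_phi[of s] in \<open>simp add: norm_mult indicator_def\<close>)
  have "(\<integral>\<omega>. f \<omega> * indicator (C k) (X k \<omega>) \<partial>M) =
     (\<integral>\<omega>. indicator (G (Suc k) C) \<omega> * iexp (s * Y \<omega> + P (Suc k) t \<omega>) -
           phi s * (indicator (G (Suc k) C) \<omega> * iexp (P (Suc k) t \<omega>)) \<partial>M)"
    by (rule Bochner_Integration.integral_cong)
       (auto simp: f_def G_Suc indicator_def algebra_simps)
  also have "\<dots> = (\<integral>\<omega>. indicator (G (Suc k) C) \<omega> * iexp (s * Y \<omega> + P (Suc k) t \<omega>) \<partial>M) -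
      phi s * (\<integral>\<omega>. indicator (G (Suc k) C) \<omega> * iexp (P (Suc k) t \<omega>) \<partial>M)"
    by (subst Bochner_Integration.integral_diff[OF i3 i4]) (simp only: integral_mult_right_zero)
  finally show ?case using z by (simp add: mult.commute)
qed

end

context cgauss begin

lemma integral_indicator_complex:
  "S \<in> sets M \<Longrightarrow> (\<integral>\<omega>. (indicator S \<omega> :: complex) \<partial>M) = complex_of_real (prob S)"
proof -
  assume S: "S \<in> sets M"
  have "(\<lambda>\<omega>. indicator S \<omega> :: complex) = (\<lambda>\<omega>. complex_of_real (indicator S \<omega>))"
    by (auto simp: indicator_def)
  then show ?thesis using S sets.sets_into_space[OF S] by (simp add: Int_absorb2)
qed

lemma ind_int: "S \<in> sets M \<Longrightarrow> integrable M (indicator S :: 'a \<Rightarrow> real)"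
  by (rule integrable_const_bound[where B=1]) (simp_all add: indicator_def)

lemma indep_G:
  assumes C: "\<And>i. C i \<in> sets borel" and Bb[measurable]: "B \<in> sets borel"
  shows "prob (G N C \<inter> (Y -` B \<inter> space M)) = prob (G N C) * prob (Y -` B \<inter> space M)"
proof -
  have GS[measurable]: "G N C \<in> sets M" by (rule G_sets[OF order.refl C])
  have q: "(\<integral>\<omega>. indicator (G N C) \<omega> * iexp (s * Y \<omega>) \<partial>M) = complex_of_real (prob (G N C)) * phi s" for s
    using Q[OF order.refl C, where s=s and t="\<lambda>_. 0"] by (simp add: P_N integral_indicator_complex[OF GS])
  define f where "f \<omega> = indicator (G N C) \<omega> - prob (G N C)" for \<omega>
  have ii: "integrable M (indicator (G N C) :: 'a \<Rightarrow> real)"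
    by (rule integrable_const_bound[where B=1]) (simp_all add: indicator_def)
  have fi: "integrable M f" unfolding f_def using ii by (intro Bochner_Integration.integrable_diff) auto
  have h: "(\<integral>\<omega>. complex_of_real (f \<omega>) * iexp (s * Y \<omega>) \<partial>M) = 0" for s
  proof -
    have i1: "integrable M (\<lambda>\<omega>. indicator (G N C) \<omega> * iexp (s * Y \<omega>))"
      by (rule bounded_int[where B=1]) (measurable, simp add: norm_mult indicator_def)
    have i2: "integrable M (\<lambda>\<omega>. complex_of_real (prob (G N C)) * iexp (s * Y \<omega>))"
      by (rule bounded_int[where B=1]) (measurable, simp add: norm_mult)
    have "(\<integral>\<omega>. complex_of_real (f \<omega>) * iexp (s * Y \<omega>) \<partial>M) =
      (\<integral>\<omega>. indicator (G N C) \<omega> * iexp (s * Y \<omega>) - complex_of_real (prob (G N C)) * iexp (s * Y \<omega>) \<partial>M)"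
      by (rule Bochner_Integration.integral_cong) (auto simp: f_def indicator_def algebra_simps)
    also have "\<dots> = 0"
      by (subst Bochner_Integration.integral_diff[OF i1 i2]) (simp only: integral_mult_right_zero q phi_def, simp)
    finally show ?thesis .
  qed
  have z: "(\<integral>\<omega>. f \<omega> * indicator B (Y \<omega>) \<partial>M) = 0"
    by (rule fourier_unique_real[OF fi Y_meas h Bb])
  have YB[measurable]: "Y -` B \<inter> space M \<in> sets M" by measurable
  have "(\<integral>\<omega>. f \<omega> * indicator B (Y \<omega>) \<partial>M) =
    (\<integral>\<omega>. indicator (G N C \<inter> (Y -` B \<inter> space M)) \<omega> - prob (G N C) * indicator (Y -` B \<inter> space M) \<omega> \<partial>M)"
    by (rule Bochner_Integration.integral_cong) (auto simp: f_def indicator_def)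
  also have "\<dots> = prob (G N C \<inter> (Y -` B \<inter> space M)) - prob (G N C) * prob (Y -` B \<inter> space M)"
    by (subst Bochner_Integration.integral_diff) (auto simp: Int_absorb2 sets.sets_into_space intro!: ind_int)
  finally show ?thesis using z by simp
qed

definition Afam :: "'a set set" where "Afam = {G N C | C. \<forall>i. C i \<in> sets borel}"
definition Bfam :: "'a set set" where "Bfam = {Y -` B \<inter> space M | B. B \<in> sets borel}"

lemma indep_AB: "indep_set (sigma_sets (space M) Afam) (sigma_sets (space M) Bfam)"
proof (rule indep_set_sigma_sets)
  show "indep_set Afam Bfam"
    unfolding indep_sets2_eq
  proof (intro conjI ballI)
    show "Afam \<subseteq> events" unfolding Afam_def using G_sets by auto
    show "Bfam \<subseteq> events" unfolding Bfam_def by auto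
    fix a b assume "a \<in> Afam" "b \<in> Bfam"
    then show "prob (a \<inter> b) = prob a * prob b" unfolding Afam_def Bfam_def using indep_G by auto
  qed
  show "Int_stable Afam"
  proof (rule Int_stableI)
    fix a b assume "a \<in> Afam" "b \<in> Afam"
    then obtain C D where "a = G N C" "b = G N D" "\<forall>i. C i \<in> sets borel" "\<forall>i. D i \<in> sets borel"
      unfolding Afam_def by auto
    moreover have "G N C \<inter> G N D = G N (\<lambda>i. C i \<inter> D i)" by (auto simp: G_def)
    ultimately show "a \<inter> b \<in> Afam" unfolding Afam_def by auto
  qed
  show "Int_stable Bfam"
  proof (rule Int_stableI)
    fix a b assume "a \<in> Bfam" "b \<in> Bfam"
    then obtain C D where "a = Y -` C \<inter> space M" "b = Y -` D \<inter> space M" "C \<in> sets borel" "D \<in> sets borel"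
      unfolding Bfam_def by auto
    moreover have "(Y -` C \<inter> space M) \<inter> (Y -` D \<inter> space M) = Y -` (C \<inter> D) \<inter> space M" by auto
    moreover have "C \<inter> D \<in> sets borel" using calculation by auto
    ultimately show "a \<inter> b \<in> Bfam" unfolding Bfam_def by blast
  qed
qed

end

locale cgauss1 = cgauss +
  assumes N1: "N \<ge> 1"
begin

definition FF :: "'a measure" where "FF = gen_sigma M (N - 1) X"
definition Gen :: "'a set set" where
  "Gen = {X i -` A \<inter> space M | i A. i \<le> N - 1 \<and> A \<in> sets borel}"

lemma Gen_Pow: "Gen \<subseteq> Pow (space M)" unfolding Gen_def by auto

lemma sets_FF: "sets FF = sigma_sets (space M) Gen"
  unfolding FF_def gen_sigma_def Gen_def[symmetric] using Gen_Pow by simp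

lemma space_FF: "space FF = space M"
  unfolding FF_def gen_sigma_def Gen_def[symmetric] using Gen_Pow by simp

lemma Gen_sets: "Gen \<subseteq> sets M"
proof
  fix S assume "S \<in> Gen"
  then obtain i A where "S = X i -` A \<inter> space M" "i \<le> N - 1" "A \<in> sets borel"
    unfolding Gen_def by auto
  moreover have "X i \<in> borel_measurable M" using Xm \<open>i \<le> N - 1\<close> by simp
  ultimately show "S \<in> sets M" by (simp add: measurable_sets)
qed

lemma Gen_Afam: "Gen \<subseteq> Afam"
proof
  fix S assume "S \<in> Gen"
  then obtain i A where S: "S = X i -` A \<inter> space M" "i \<le> N - 1" "A \<in> sets borel"
    unfolding Gen_def by auto
  have "i < N" using S(2) N1 by simp
  then have "S = G N (\<lambda>j. if j = i then A else UNIV)" unfolding S(1) G_def by auto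
  moreover have "\<forall>j. (\<lambda>j. if j = i then A else UNIV) j \<in> sets borel" using S(3) by simp
  ultimately show "S \<in> Afam" unfolding Afam_def by blast
qed

lemma FF_sub: "sets FF \<subseteq> sigma_sets (space M) Afam"
  unfolding sets_FF by (rule sigma_sets_mono'[OF Gen_Afam])

lemma subalg: "subalgebra M FF"
  unfolding subalgebra_def sets_FF space_FF using sets.sigma_sets_subset[OF Gen_sets] by simp

lemma X_FF: "i < N \<Longrightarrow> X i \<in> borel_measurable FF"
proof (rule measurableI)
  fix A :: "real set" assume "i < N" "A \<in> sets borel"
  then have "i \<le> N - 1" by simp
  then have "X i -` A \<inter> space M \<in> Gen" unfolding Gen_def using \<open>A \<in> sets borel\<close> by blast
  then show "X i -` A \<inter> space FF \<in> sets FF" unfolding sets_FF space_FF by auto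
qed simp

lemma indepF:
  assumes "A \<in> sets FF" "b \<in> sigma_sets (space M) Bfam"
  shows "prob (A \<inter> b) = prob A * prob b"
  using indep_AB FF_sub assms unfolding indep_sets2_eq by auto

lemma indep_U:
  assumes U: "U \<in> measurable FF S'" and g: "g \<in> measurable borel S'"
  shows "indep_var S' U S' (\<lambda>\<omega>. g (Y \<omega>))"
proof -
  have gen: "{U -` A \<inter> space M | A. A \<in> sets S'} \<subseteq> sets FF"
    using measurable_sets[OF U] space_FF by auto
  have s1: "sigma_sets (space M) {U -` A \<inter> space M | A. A \<in> sets S'} \<subseteq> sets FF"
    using sets.sigma_sets_subset[where M=FF, OF gen] space_FF by simp
  have gen2: "{(\<lambda>\<omega>. g (Y \<omega>)) -` A \<inter> space M | A. A \<in> sets S'} \<subseteq> Bfam"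
  proof
    fix S assume "S \<in> {(\<lambda>\<omega>. g (Y \<omega>)) -` A \<inter> space M | A. A \<in> sets S'}"
    then obtain A where A: "S = (\<lambda>\<omega>. g (Y \<omega>)) -` A \<inter> space M" "A \<in> sets S'" by auto
    have "g -` A \<in> sets borel" using measurable_sets[OF g A(2)] by simp
    moreover have "S = Y -` (g -` A) \<inter> space M" using A(1) by auto
    ultimately show "S \<in> Bfam" unfolding Bfam_def by blast
  qed
  have s2: "sigma_sets (space M) {(\<lambda>\<omega>. g (Y \<omega>)) -` A \<inter> space M | A. A \<in> sets S'} \<subseteq> sigma_sets (space M) Bfam"
    by (rule sigma_sets_mono'[OF gen2])
  have ev1: "sets FF \<subseteq> events" using subalg by (simp add: subalgebra_def)
  have ev2: "sigma_sets (space M) Bfam \<subseteq> events" using indep_setD_ev2[OF indep_AB] .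
  show ?thesis unfolding indep_var_eq
  proof (intro conjI)
    show "random_variable S' U" by (rule measurable_from_subalg[OF subalg U])
    show "random_variable S' (\<lambda>\<omega>. g (Y \<omega>))" using g by measurable
    show "indep_set (sigma_sets (space M) {U -` A \<inter> space M |A. A \<in> sets S'})
       (sigma_sets (space M) {(\<lambda>\<omega>. g (Y \<omega>)) -` A \<inter> space M |A. A \<in> sets S'})"
      unfolding indep_sets2_eq
      using s1 s2 ev1 ev2 indepF by blast
  qed
qed

end

context cgauss1 begin

definition Zc :: "'a \<Rightarrow> real" where "Zc \<omega> = (\<Sum>i<N. coef i * X i \<omega>)"

lemma Zc_FF: "Zc \<in> borel_measurable FF"
  unfolding Zc_def[abs_def] using X_FF by (intro borel_measurable_sum borel_measurable_times) auto

lemma XN_eq: "X N \<omega> = Zc \<omega> + Y \<omega>"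
  using Y_alt[of \<omega>] by (simp add: Zc_def)

lemma X_int: "i \<le> N \<Longrightarrow> integrable M (X i)"
proof -
  assume "i \<le> N"
  then have "X i = lin (ev i)" by (simp add: lin_ev fun_eq_iff)
  then show ?thesis using lin_int by simp
qed

lemma Zc_int: "integrable M Zc"
  unfolding Zc_def[abs_def] using X_int by (intro Bochner_Integration.integrable_sum integrable_mult_right) auto

lemma Y_int: "integrable M Y" unfolding Y_def by (rule lin_int)

lemma Y_mean: "expectation Y = 0" unfolding Y_def by (rule gauss_props(3)[OF gauss_lin])

lemma cond_exp_eq: "AE \<omega> in M. real_cond_exp M FF (X N) \<omega> = Zc \<omega>"
proof -
  interpret fs: finite_measure_subalgebra M FF by unfold_locales (rule subalg)
  show ?thesis
  proof (rule fs.real_cond_exp_charact)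
    show "integrable M (X N)" by (rule X_int) simp
    show "integrable M Zc" by (rule Zc_int)
    show "Zc \<in> borel_measurable FF" by (rule Zc_FF)
    fix A assume A: "A \<in> sets FF"
    have AM: "A \<in> sets M" using A subalg by (auto simp: subalgebra_def)
    have iA: "indicator A \<in> borel_measurable FF" by (rule borel_measurable_indicator[OF A])
    have ind: "indep_var borel (indicator A) borel Y" using indep_U[OF iA, of "\<lambda>y. y"] by simp
    have "(\<integral>\<omega>. indicator A \<omega> * Y \<omega> \<partial>M) = expectation (indicator A) * expectation Y"
      by (rule indep_var_lebesgue_integral[OF ind ind_int[OF AM] Y_int])
    then have y0: "(\<integral>\<omega>. indicator A \<omega> * Y \<omega> \<partial>M) = 0" by (simp add: Y_mean)
    have i1: "integrable M (\<lambda>\<omega>. Zc \<omega> * indicator A \<omega>)"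
      by (rule integrable_bounded_rmult[OF Zc_int]) (rule borel_measurable_indicator[OF AM], simp add: indicator_def)
    have i2: "integrable M (\<lambda>\<omega>. Y \<omega> * indicator A \<omega>)"
      by (rule integrable_bounded_rmult[OF Y_int]) (rule borel_measurable_indicator[OF AM], simp add: indicator_def)
    have "(\<integral>\<omega>\<in>A. X N \<omega> \<partial>M) = (\<integral>\<omega>. Zc \<omega> * indicator A \<omega> + Y \<omega> * indicator A \<omega> \<partial>M)"
      unfolding set_lebesgue_integral_def by (rule Bochner_Integration.integral_cong) (simp_all add: XN_eq algebra_simps)
    also have "\<dots> = (\<integral>\<omega>. Zc \<omega> * indicator A \<omega> \<partial>M)"
      using y0 by (subst Bochner_Integration.integral_add[OF i1 i2]) (simp add: mult.commute)
    also have "\<dots> = (\<integral>\<omega>\<in>A. Zc \<omega> \<partial>M)"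
      unfolding set_lebesgue_integral_def by (simp add: mult.commute)
    finally show "(\<integral>\<omega>\<in>A. X N \<omega> \<partial>M) = (\<integral>\<omega>\<in>A. Zc \<omega> \<partial>M)" .
  qed
qed

end

context cgauss1 begin

lemma prod_bound:
  assumes A: "A \<in> sets FF" and W: "W \<in> borel_measurable FF" and \<sigma>: "\<sigma> > 0"
    and D: "distributed M lborel Y (normal_density 0 \<sigma>)" and x: "x > 0"
  shows "prob (A \<inter> {\<omega> \<in> space M. \<bar>Y \<omega> + W \<omega>\<bar> < x}) \<le> prob A * prob {\<omega> \<in> space M. \<bar>Y \<omega>\<bar> < x}"
proof -
  define R where "R = (borel \<Otimes>\<^sub>M borel :: (real \<times> real) measure)"
  define U where "U \<omega> = (indicator A \<omega> :: real, W \<omega>)" for \<omega>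
  define V where "V \<omega> = (Y \<omega>, 0 :: real)" for \<omega>
  have UF: "U \<in> measurable FF R"
    unfolding U_def[abs_def] R_def by (intro measurable_Pair borel_measurable_indicator[OF A] W)
  have UM[measurable]: "U \<in> measurable M R" by (rule measurable_from_subalg[OF subalg UF])
  have gm: "(\<lambda>y::real. (y, 0::real)) \<in> measurable borel R" unfolding R_def by measurable
  have VM[measurable]: "V \<in> measurable M R" unfolding V_def[abs_def] R_def by measurable
  have ind: "indep_var R U R V" using indep_U[OF UF gm] by (simp add: V_def[abs_def])
  have prodeq: "distr M R U \<Otimes>\<^sub>M distr M R V = distr M (R \<Otimes>\<^sub>M R) (\<lambda>\<omega>. (U \<omega>, V \<omega>))"
    using ind unfolding indep_var_distribution_eq by simp
  define S where "S = {p \<in> space (R \<Otimes>\<^sub>M R). fst (fst p) = (1::real) \<and> \<bar>fst (snd p) + snd (fst p)\<bar> < x}"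
  have S[measurable]: "S \<in> sets (R \<Otimes>\<^sub>M R)" unfolding S_def R_def by measurable
  have AM: "A \<in> sets M" using A subalg by (auto simp: subalgebra_def)
  have set_eq: "A \<inter> {\<omega> \<in> space M. \<bar>Y \<omega> + W \<omega>\<bar> < x} = (\<lambda>\<omega>. (U \<omega>, V \<omega>)) -` S \<inter> space M"
    using sets.sets_into_space[OF AM]
    by (auto simp: S_def U_def V_def R_def indicator_def space_pair_measure)
  have PY: "sigma_finite_measure (distr M R V)"
    by (rule prob_space_imp_sigma_finite) (rule prob_space_distr, simp)
  define c where "c = emeasure M {\<omega> \<in> space M. \<bar>Y \<omega>\<bar> < x}"
  define T where "T = {u \<in> space R. fst u = (1::real)}"
  have T[measurable]: "T \<in> sets R" unfolding T_def R_def by measurable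
  have sec: "emeasure (distr M R V) (Pair u -` S) \<le> c * indicator T u" for u
  proof (cases "fst u = 1")
    case True
    define Q where "Q = {p \<in> space R. \<bar>fst p + snd u\<bar> < x}"
    have eq: "Pair u -` S = Q" using True by (auto simp: S_def Q_def R_def space_pair_measure)
    have ms: "Q \<in> sets R" unfolding Q_def R_def by measurable
    have "emeasure (distr M R V) (Pair u -` S) = emeasure M (V -` Q \<inter> space M)"
      unfolding eq by (rule emeasure_distr[OF VM ms])
    also have "V -` Q \<inter> space M = {\<omega> \<in> space M. \<bar>Y \<omega> + snd u\<bar> < x}"
      by (auto simp: Q_def V_def R_def space_pair_measure)
    also have "emeasure M {\<omega> \<in> space M. \<bar>Y \<omega> + snd u\<bar> < x} \<le> c"
      using normal_anderson[OF D \<sigma> x, of "snd u"] unfolding c_def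
      by (simp add: emeasure_eq_measure)
    finally show ?thesis using True by (simp add: T_def R_def space_pair_measure)
  next
    case False
    then have "Pair u -` S = {}" by (auto simp: S_def)
    then show ?thesis by simp
  qed
  have "emeasure M (A \<inter> {\<omega> \<in> space M. \<bar>Y \<omega> + W \<omega>\<bar> < x}) =
      emeasure (distr M (R \<Otimes>\<^sub>M R) (\<lambda>\<omega>. (U \<omega>, V \<omega>))) S"
    unfolding set_eq by (rule emeasure_distr[symmetric]) simp_all
  also have "\<dots> = emeasure (distr M R U \<Otimes>\<^sub>M distr M R V) S"
    by (simp only: prodeq)
  also have "\<dots> = (\<integral>\<^sup>+u. emeasure (distr M R V) (Pair u -` S) \<partial>distr M R U)"
    by (rule sigma_finite_measure.emeasure_pair_measure_alt[OF PY]) simp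
  also have "\<dots> \<le> (\<integral>\<^sup>+u. c * indicator T u \<partial>distr M R U)"
    by (rule nn_integral_mono) (rule sec)
  also have "\<dots> = c * emeasure (distr M R U) T"
    by (rule nn_integral_cmult_indicator) simp
  also have "emeasure (distr M R U) T = emeasure M (U -` T \<inter> space M)"
    by (rule emeasure_distr[OF UM T])
  also have "U -` T \<inter> space M = A"
    using sets.sets_into_space[OF AM] by (auto simp: T_def U_def R_def indicator_def space_pair_measure)
  finally have "emeasure M (A \<inter> {\<omega> \<in> space M. \<bar>Y \<omega> + W \<omega>\<bar> < x}) \<le> c * emeasure M A" .
  then have "ennreal (prob (A \<inter> {\<omega> \<in> space M. \<bar>Y \<omega> + W \<omega>\<bar> < x})) \<le>
      ennreal (prob {\<omega> \<in> space M. \<bar>Y \<omega>\<bar> < x} * prob A)"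
    unfolding c_def by (simp add: emeasure_eq_measure ennreal_mult)
  then show ?thesis by (simp add: mult.commute)
qed

end

context cgauss1 begin

lemma main:
  assumes x: "x > 0"
  shows "measure M {\<omega> \<in> space M. \<forall>j\<in>{1..N}. \<bar>X j \<omega> - X (j - 1) \<omega>\<bar> < x}
         \<le> measure M {\<omega> \<in> space M. \<forall>j\<in>{1..<N}. \<bar>X j \<omega> - X (j - 1) \<omega>\<bar> < x}
           * measure M {\<omega> \<in> space M.
               \<bar>X N \<omega> - real_cond_exp M (gen_sigma M (N - 1) X) (X N) \<omega>\<bar> < x}"
proof -
  define Aset where "Aset = {\<omega> \<in> space M. \<forall>j\<in>{1..<N}. \<bar>X j \<omega> - X (j - 1) \<omega>\<bar> < x}"
  have AF: "Aset \<in> sets FF"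
  proof -
    have "{\<omega> \<in> space FF. \<forall>j\<in>{1..<N}. \<bar>X j \<omega> - X (j - 1) \<omega>\<bar> < x} \<in> sets FF"
    proof (rule sets.sets_Collect_finite_All)
      fix j assume j: "j \<in> {1..<N}"
      have [measurable]: "X j \<in> borel_measurable FF" "X (j - 1) \<in> borel_measurable FF"
        using X_FF j by auto
      show "{\<omega> \<in> space FF. \<bar>X j \<omega> - X (j - 1) \<omega>\<bar> < x} \<in> sets FF" by measurable
    qed simp
    then show ?thesis unfolding Aset_def space_FF .
  qed
  have AM: "Aset \<in> sets M" using AF subalg by (auto simp: subalgebra_def)
  define W where "W \<omega> = Zc \<omega> - X (N - 1) \<omega>" for \<omega>
  have WF: "W \<in> borel_measurable FF"
    unfolding W_def[abs_def] using Zc_FF X_FF[of "N - 1"] N1 by (intro borel_measurable_diff) auto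
  have lhs: "{\<omega> \<in> space M. \<forall>j\<in>{1..N}. \<bar>X j \<omega> - X (j - 1) \<omega>\<bar> < x} =
      Aset \<inter> {\<omega> \<in> space M. \<bar>Y \<omega> + W \<omega>\<bar> < x}"
  proof -
    have "{1..N} = insert N {1..<N}" using N1 by auto
    then show ?thesis unfolding Aset_def W_def using XN_eq by (auto simp: algebra_simps)
  qed
  have XNm[measurable]: "X N \<in> borel_measurable M" using Xm by simp
  have rce: "measure M {\<omega> \<in> space M. \<bar>X N \<omega> - real_cond_exp M (gen_sigma M (N - 1) X) (X N) \<omega>\<bar> < x}
      = prob {\<omega> \<in> space M. \<bar>Y \<omega>\<bar> < x}"
  proof (rule measure_eq_AE)
    show "AE \<omega> in M. (\<omega> \<in> {\<omega> \<in> space M. \<bar>X N \<omega> - real_cond_exp M (gen_sigma M (N - 1) X) (X N) \<omega>\<bar> < x}) =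
        (\<omega> \<in> {\<omega> \<in> space M. \<bar>Y \<omega>\<bar> < x})"
      using cond_exp_eq unfolding FF_def by eventually_elim (simp add: XN_eq)
    show "{\<omega> \<in> space M. \<bar>X N \<omega> - real_cond_exp M (gen_sigma M (N - 1) X) (X N) \<omega>\<bar> < x} \<in> events"
      by measurable
    show "{\<omega> \<in> space M. \<bar>Y \<omega>\<bar> < x} \<in> events" by measurable
  qed
  have gY: "gauss M Y" unfolding Y_def by (rule gauss_lin)
  show ?thesis
  proof (cases "AE \<omega> in M. Y \<omega> = 0")
    case True
    have "prob {\<omega> \<in> space M. \<bar>Y \<omega>\<bar> < x} = prob (space M)"
      by (rule measure_eq_AE) (use True x in \<open>auto elim!: eventually_mono\<close>)
    then have p1: "prob {\<omega> \<in> space M. \<bar>Y \<omega>\<bar> < x} = 1" by (simp add: prob_space)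
    have "prob (Aset \<inter> {\<omega> \<in> space M. \<bar>Y \<omega> + W \<omega>\<bar> < x}) \<le> prob Aset"
      by (rule finite_measure_mono) (auto simp: AM)
    then show ?thesis unfolding lhs rce p1 Aset_def[symmetric] by simp
  next
    case False
    then obtain \<sigma> where \<sigma>: "\<sigma> > 0" and D: "distributed M lborel Y (normal_density 0 \<sigma>)"
      using gY by (auto simp: gauss_def)
    show ?thesis unfolding lhs rce Aset_def[symmetric]
      by (rule prod_bound[OF AF WF \<sigma> D x])
  qed
qed

end

theorem lemma2p1:
  fixes M :: "'a measure" and X :: "nat \<Rightarrow> 'a \<Rightarrow> real" and n :: nat and x :: real
  assumes "prob_space M"
    and "n \<ge> 1"
    and "centered_gaussian_vector M n X"
    and "x > 0"
  shows "measure M {\<omega> \<in> space M. \<forall>j\<in>{1..n}. \<bar>X j \<omega> - X (j - 1) \<omega>\<bar> < x}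
         \<le> measure M {\<omega> \<in> space M. \<forall>j\<in>{1..<n}. \<bar>X j \<omega> - X (j - 1) \<omega>\<bar> < x}
           * measure M {\<omega> \<in> space M.
               \<bar>X n \<omega> - real_cond_exp M (gen_sigma M (n - 1) X) (X n) \<omega>\<bar> < x}"
proof -
  have "cgauss1 M n X"
    using assms by (simp add: cgauss1_def cgauss_def cgauss1_axioms_def cgauss_axioms_def)
  then interpret cgauss1 M n X .
  show ?thesis by (rule main[OF assms(4)])
qed

end
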